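(* Let $X=\{x_j:j\in J\}\subset\mathbb{R}^2$ be finite with quadratic min-power centre $s^*$, centroid $M$ and $1$-centre $C$. Let $J^*\subseteq J$ be the support of a KKT multiplier vector for $s^*$ with the minimum possible number of nonzero entries, chosen so that $\{x_j:j\in J^*\}$ is the vertex set of a face of a farthest point Delaunay triangulation of $X$, and let $\mathcal{M}^*=\{M_j:j\in J^*\}$. If $M\in\mathrm{conv}(\mathcal{M}^* )$ then $s^*=C$.
   Context: $n=|J|$; $P(s)=\sum_{i\in J}\|s-x_i\|^2+\max_{i\in J}\|s-x_i\|^2$ and $s^*$ is its unique minimiser; $M=\frac1n\sum_i x_i$; $M_j=\frac{1}{n+1}\big(x_j+\sum_{i\in J}x_i\big)$; $C$ is the centre of the minimum enclosing circle of $X$. A KKT multiplier vector for $s^*$ is $(\lambda_j)_{j\in J}$ with $\lambda_j\geq0$, $\sum_j\lambda_j=1$, $s^*=\sum_j\lambda_jM_j$, and $\lambda_j\big(\|s^*-x_j\|-\max_{i}\|s^*-x_i\|\big)=0$ for all $j$. A farthest point Delaunay triangulation of $X$ is a triangulation of the extreme points of $X$ in which the circumcircle of every triangle encloses all of $X$; its faces are its vertices, edges and triangles. *)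

theory Defs
  imports "HOL-Analysis.Analysis"
begin

definition qpower :: "'j set \<Rightarrow> ('j \<Rightarrow> real^2) \<Rightarrow> real^2 \<Rightarrow> real" where
  "qpower J x s = (\<Sum>i\<in>J. (norm (s - x i))^2) + Max ((\<lambda>i. (norm (s - x i))^2) ` J)"

definition centroid_pts :: "'j set \<Rightarrow> ('j \<Rightarrow> real^2) \<Rightarrow> real^2" where
  "centroid_pts J x = (1 / real (card J)) *\<^sub>R (\<Sum>i\<in>J. x i)"

definition Mpt :: "'j set \<Rightarrow> ('j \<Rightarrow> real^2) \<Rightarrow> 'j \<Rightarrow> real^2" where
  "Mpt J x j = (1 / (real (card J) + 1)) *\<^sub>R (x j + (\<Sum>i\<in>J. x i))"

definition is_KKT_multiplier ::
  "'j set \<Rightarrow> ('j \<Rightarrow> real^2) \<Rightarrow> real^2 \<Rightarrow> ('j \<Rightarrow> real) \<Rightarrow> bool" where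
  "is_KKT_multiplier J x s lam \<longleftrightarrow>
     (\<forall>j\<in>J. lam j \<ge> 0) \<and> sum lam J = 1 \<and>
     s = (\<Sum>j\<in>J. lam j *\<^sub>R Mpt J x j) \<and>
     (\<forall>j\<in>J. lam j * (norm (s - x j) - Max ((\<lambda>i. norm (s - x i)) ` J)) = 0)"

definition support_in :: "'j set \<Rightarrow> ('j \<Rightarrow> real) \<Rightarrow> 'j set" where
  "support_in J lam = {j\<in>J. lam j \<noteq> 0}"

definition is_min_enclosing_centre :: "(real^2) set \<Rightarrow> real^2 \<Rightarrow> bool" where
  "is_min_enclosing_centre X C \<longleftrightarrow>
     (\<forall>c. Max ((\<lambda>y. dist C y) ` X) \<le> Max ((\<lambda>y. dist c y) ` X))"

text \<open>A farthest point Delaunay triangulation of X, given as the set K of its faces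
  (vertices, edges, triangles): a simplicial complex of affinely independent cells,
  closed under nonempty subsets, with proper intersections, whose vertex set is the
  set of extreme points of X and whose cells cover conv X, such that the circumcircle
  of every triangle encloses all of X.\<close>
definition fp_delaunay_faces :: "(real^2) set \<Rightarrow> (real^2) set set \<Rightarrow> bool" where
  "fp_delaunay_faces X K \<longleftrightarrow>
     finite K \<and>
     (\<forall>\<sigma>\<in>K. \<sigma> \<noteq> {} \<and> \<not> affine_dependent \<sigma> \<and> (\<forall>\<tau>. \<tau> \<subseteq> \<sigma> \<and> \<tau> \<noteq> {} \<longrightarrow> \<tau> \<in> K)) \<and>
     (\<forall>\<sigma>\<in>K. \<forall>\<tau>\<in>K. convex hull \<sigma> \<inter> convex hull \<tau> = convex hull (\<sigma> \<inter> \<tau>)) \<and>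
     \<Union>K = {v. v extreme_point_of (convex hull X)} \<and>
     (\<Union>\<sigma>\<in>K. convex hull \<sigma>) = convex hull X \<and>
     (\<forall>\<sigma>\<in>K. card \<sigma> = 3 \<longrightarrow>
        (\<exists>c r. (\<forall>v\<in>\<sigma>. dist v c = r) \<and> (\<forall>y\<in>X. dist y c \<le> r)))"

end

theory Submission
  imports Defs
begin

lemma mec_unique:
  fixes F :: "(real^2) set" and s c :: "real^2"
  assumes "s \<in> convex hull F" "c \<noteq> s" "\<forall>y\<in>F. norm (s - y) = R"
  shows "\<exists>y\<in>F. norm (c - y) > R"
proof (rule ccontr)
  assume "\<not> ?thesis"
  hence le: "\<forall>y\<in>F. norm (c - y) \<le> R" by auto
  define d where "d = c - s"
  have dpos: "d \<bullet> d > 0" using assms(2) d_def by simp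
  have "F \<subseteq> {y. d \<bullet> s < d \<bullet> y}"
  proof
    fix y assume y: "y \<in> F"
    have "c - y = d + (s - y)" using d_def by simp
    hence "(norm (c - y))^2 = d \<bullet> d + 2 * (d \<bullet> (s - y)) + (norm (s - y))^2"
      by (simp only: power2_norm_eq_inner inner_add_left inner_add_right inner_commute)
    moreover have "(norm (c - y))^2 \<le> R^2" using le y by (simp add: power_mono)
    moreover have "(norm (s - y))^2 = R^2" using assms(3) y by auto
    ultimately have "d \<bullet> (s - y) < 0" using dpos by linarith
    thus "y \<in> {y. d \<bullet> s < d \<bullet> y}" by (simp add: inner_diff_right)
  qed
  hence "convex hull F \<subseteq> {y. d \<bullet> s < d \<bullet> y}"
    by (rule hull_minimal) (rule convex_halfspace_gt)
  thus False using assms(1) by auto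
qed

theorem proposition2:
  fixes J :: "'j set" and x :: "'j \<Rightarrow> real^2"
    and s C :: "real^2" and lam :: "'j \<Rightarrow> real"
  assumes "finite J" and "J \<noteq> {}" and "inj_on x J"
    and s_min: "\<forall>t. qpower J x s \<le> qpower J x t"
    and C_centre: "is_min_enclosing_centre (x ` J) C"
    and lam_KKT: "is_KKT_multiplier J x s lam"
    and lam_min: "\<forall>mu. is_KKT_multiplier J x s mu \<longrightarrow>
                        card (support_in J lam) \<le> card (support_in J mu)"
    and face: "\<exists>K. fp_delaunay_faces (x ` J) K \<and> x ` (support_in J lam) \<in> K"
    and M_in: "centroid_pts J x \<in> convex hull (Mpt J x ` support_in J lam)"
  shows "s = C"
proof -
  define S where "S = support_in J lam"
  define n where "n = real (card J)"
  define Sg where "Sg = (\<Sum>i\<in>J. x i)"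
  define Mc where "Mc = centroid_pts J x"
  have npos: "n > 0" using assms(1,2) n_def by (simp add: card_gt_0_iff)
  have SJ: "S \<subseteq> J" unfolding S_def support_in_def by auto
  have lam0: "\<forall>j\<in>J. lam j \<ge> 0" and lam1: "sum lam J = 1"
    and sdef: "s = (\<Sum>j\<in>J. lam j *\<^sub>R Mpt J x j)"
    and comp: "\<forall>j\<in>J. lam j * (norm (s - x j) - Max ((\<lambda>i. norm (s - x i)) ` J)) = 0"
    using lam_KKT unfolding is_KKT_multiplier_def by auto
  have Mc_eq: "Mc = (1/n) *\<^sub>R Sg" using Mc_def n_def Sg_def centroid_pts_def by simp
  have Sg_eq: "Sg = n *\<^sub>R Mc" using Mc_eq npos by simp
  define T where "T = (\<lambda>y::real^2. (1/(n+1)) *\<^sub>R (y + Sg))"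
  have MptT: "Mpt J x ` S = T ` (x ` S)"
    unfolding T_def Mpt_def n_def Sg_def image_image by simp
  have Timg: "T ` A = (*\<^sub>R) (1/(n+1)) ` ((+) Sg ` A)" for A
    unfolding T_def image_image by (simp add: add.commute)
  have cT: "convex hull (T ` A) = T ` (convex hull A)" for A
    unfolding Timg by (simp only: convex_hull_scaling convex_hull_translation)
  have "Mc \<in> T ` (convex hull (x ` S))"
    using M_in unfolding Mc_def[symmetric] S_def[symmetric] MptT cT .
  then obtain q where q: "q \<in> convex hull (x ` S)" "Mc = T q" by auto
  have "(n+1) *\<^sub>R Mc = q + Sg" using q(2) npos unfolding T_def by simp
  hence "n *\<^sub>R Mc + Mc = q + n *\<^sub>R Mc" unfolding Sg_eq by (simp add: scaleR_left_distrib)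
  hence "q = Mc" by (metis add.commute add_right_cancel)
  with q(1) have Mc_in: "Mc \<in> convex hull (x ` S)" by simp
  have lamS: "\<forall>j\<in>J - S. lam j = 0" unfolding S_def support_in_def by auto
  define p where "p = (\<Sum>j\<in>J. lam j *\<^sub>R x j)"
  have pS: "p = (\<Sum>j\<in>S. lam j *\<^sub>R x j)" unfolding p_def
    by (rule sum.mono_neutral_right) (use assms(1) SJ lamS in auto)
  have l1S: "sum lam S = 1" using lam1
    sum.mono_neutral_right[OF assms(1) SJ, of lam] lamS by auto
  have p_in: "p \<in> convex hull (x ` S)" unfolding pS
    by (rule convex_sum) (use assms(1) SJ l1S lam0 finite_subset in \<open>auto intro: hull_inc\<close>)
  have "s = (\<Sum>j\<in>J. lam j *\<^sub>R ((1/(n+1)) *\<^sub>R (x j + Sg)))"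
    unfolding sdef Mpt_def n_def Sg_def by simp
  also have "\<dots> = (1/(n+1)) *\<^sub>R (p + sum lam J *\<^sub>R Sg)"
  proof -
    have "(\<Sum>j\<in>J. lam j *\<^sub>R ((1/(n+1)) *\<^sub>R (x j + Sg)))
        = (1/(n+1)) *\<^sub>R (\<Sum>j\<in>J. lam j *\<^sub>R x j + lam j *\<^sub>R Sg)"
      by (simp add: scaleR_right.sum scaleR_add_right)
    also have "\<dots> = (1/(n+1)) *\<^sub>R (p + (\<Sum>j\<in>J. lam j *\<^sub>R Sg))"
      unfolding p_def by (simp only: sum.distrib)
    also have "(\<Sum>j\<in>J. lam j *\<^sub>R Sg) = sum lam J *\<^sub>R Sg"
      by (rule scaleR_left.sum[symmetric])
    finally show ?thesis .
  qed
  also have "\<dots> = (1/(n+1)) *\<^sub>R p + (n/(n+1)) *\<^sub>R Mc"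
    using lam1 Sg_eq by (simp add: scaleR_add_right)
  finally have s_eq: "s = (1/(n+1)) *\<^sub>R p + (n/(n+1)) *\<^sub>R Mc" .
  have s_in: "s \<in> convex hull (x ` S)" unfolding s_eq
    by (rule convexD[OF convex_convex_hull p_in Mc_in]) (use npos in \<open>auto simp: field_simps\<close>)
  define R where "R = Max ((\<lambda>i. norm (s - x i)) ` J)"
  have distR: "\<forall>y\<in>x ` S. norm (s - y) = R"
    using comp unfolding S_def support_in_def R_def by auto
  have RX: "Max ((\<lambda>y. dist s y) ` (x ` J)) = R"
    unfolding R_def image_image dist_norm by simp
  show ?thesis
  proof (rule ccontr)
    assume "s \<noteq> C"
    then obtain y where y: "y \<in> x ` S" "norm (C - y) > R"
      using mec_unique[OF s_in _ distR, of C] by auto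
    have "dist C y \<le> Max ((\<lambda>y. dist C y) ` (x ` J))"
      using y(1) SJ assms(1) by (intro Max_ge) auto
    also have "\<dots> \<le> R" using C_centre RX unfolding is_min_enclosing_centre_def by metis
    finally show False using y(2) by (simp add: dist_norm)
  qed
qed

end
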